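(* Let $F:\mathcal{C}\to\mathcal{D}$ be a Frobenius functor, and let $G:\mathcal{D}\to\mathcal{C}$ be both a left and a right adjoint of $F$. Let $\eta:1_{\mathcal{C}}\to GF$ be the unit of the adjunction in which $F$ is left adjoint to $G$, and $\mu:GF\to 1_{\mathcal{C}}$ the counit of the adjunction in which $G$ is left adjoint to $F$. The following are equivalent: (1) $F$ is naturally full; (2) there exists a natural transformation $\alpha:G\to G$ with $\eta_C\circ\mu_C\circ\alpha_{FC}=\mathrm{id}_{GFC}$ for all $C\in\mathcal{C}$; (3) there exists a natural transformation $\beta:F\to F$ with $\eta_C\circ\mu_C\circ G(\beta_C)=\mathrm{id}_{GFC}$ for all $C\in\mathcal{C}$; (4) there exists a natural transformation $\tilde\alpha:G\to G$ with $\tilde\alpha_{FC}\circ\eta_C\circ\mu_C=\mathrm{id}_{GFC}$ for all $C\in\mathcal{C}$; (5) there exists a natural transformation $\tilde\beta:F\to F$ with $G(\tilde\beta_C)\circ\eta_C\circ\mu_C=\mathrm{id}_{GFC}$ for all $C\in\mathcal{C}$. In this case $\eta_C\circ\mu_C$ is an isomorphism in $\mathcal{C}$ and (for $\alpha,\beta,\tilde\alpha,\tilde\beta$ as in (2)–(5)) $\alpha_{FC}=\tilde\alpha_{FC}=G(\beta_C)=G(\tilde\beta_C)$.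
   Context: A functor is Frobenius if it has a right adjoint which is also a left adjoint. For a functor $F:\mathcal{A}\to\mathcal{B}$, let $\mathcal{F}:\mathrm{Hom}_{\mathcal{A}}(\bullet,\bullet)\to\mathrm{Hom}_{\mathcal{B}}(F(\bullet),F(\bullet))$, $\mathcal{F}_{A,A'}(f)=F(f)$. $F$ is called naturally full if there is a natural transformation $\mathcal{P}:\mathrm{Hom}_{\mathcal{B}}(F(\bullet),F(\bullet))\to\mathrm{Hom}_{\mathcal{A}}(\bullet,\bullet)$ (natural in both variables) such that $F(\mathcal{P}_{A,A'}(u))=u$ for all $u:F(A)\to F(A')$. *)

theory Defs
  imports Main
begin

record ('o, 'm) category =
  Obj :: "'o set"
  Arr :: "'m set"
  src :: "'m \<Rightarrow> 'o"
  tgt :: "'m \<Rightarrow> 'o"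
  ident :: "'o \<Rightarrow> 'm"
  cmp :: "'m \<Rightarrow> 'm \<Rightarrow> 'm"   (* cmp C g f = g \<circ> f *)

definition Hom :: "('o, 'm) category \<Rightarrow> 'o \<Rightarrow> 'o \<Rightarrow> 'm set" where
  "Hom C a b = {f \<in> Arr C. src C f = a \<and> tgt C f = b}"

definition is_category :: "('o, 'm) category \<Rightarrow> bool" where
  "is_category C \<longleftrightarrow>
     (\<forall>f \<in> Arr C. src C f \<in> Obj C \<and> tgt C f \<in> Obj C) \<and>
     (\<forall>a \<in> Obj C. ident C a \<in> Hom C a a) \<and>
     (\<forall>a \<in> Obj C. \<forall>b \<in> Obj C. \<forall>c \<in> Obj C. \<forall>f \<in> Hom C a b. \<forall>g \<in> Hom C b c.
        cmp C g f \<in> Hom C a c) \<and>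
     (\<forall>a \<in> Obj C. \<forall>b \<in> Obj C. \<forall>f \<in> Hom C a b.
        cmp C f (ident C a) = f \<and> cmp C (ident C b) f = f) \<and>
     (\<forall>a \<in> Obj C. \<forall>b \<in> Obj C. \<forall>c \<in> Obj C. \<forall>d \<in> Obj C.
        \<forall>f \<in> Hom C a b. \<forall>g \<in> Hom C b c. \<forall>h \<in> Hom C c d.
        cmp C h (cmp C g f) = cmp C (cmp C h g) f)"

definition is_iso :: "('o, 'm) category \<Rightarrow> 'm \<Rightarrow> bool" where
  "is_iso C f \<longleftrightarrow> f \<in> Arr C \<and>
     (\<exists>g \<in> Hom C (tgt C f) (src C f).
        cmp C g f = ident C (src C f) \<and> cmp C f g = ident C (tgt C f))"

record ('a, 'b, 'c, 'd) functr =
  omap :: "'a \<Rightarrow> 'c"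
  fmap :: "'b \<Rightarrow> 'd"

definition is_functor ::
  "('a, 'b) category \<Rightarrow> ('c, 'd) category \<Rightarrow> ('a, 'b, 'c, 'd) functr \<Rightarrow> bool" where
  "is_functor C D F \<longleftrightarrow>
     is_category C \<and> is_category D \<and>
     (\<forall>a \<in> Obj C. omap F a \<in> Obj D) \<and>
     (\<forall>a \<in> Obj C. \<forall>b \<in> Obj C. \<forall>f \<in> Hom C a b. fmap F f \<in> Hom D (omap F a) (omap F b)) \<and>
     (\<forall>a \<in> Obj C. fmap F (ident C a) = ident D (omap F a)) \<and>
     (\<forall>a \<in> Obj C. \<forall>b \<in> Obj C. \<forall>c \<in> Obj C. \<forall>f \<in> Hom C a b. \<forall>g \<in> Hom C b c.
        fmap F (cmp C g f) = cmp D (fmap F g) (fmap F f))"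

definition id_functor :: "('a, 'b, 'a, 'b) functr" where
  "id_functor = \<lparr>omap = (\<lambda>x. x), fmap = (\<lambda>f. f)\<rparr>"

definition functor_comp ::
  "('c, 'd, 'e, 'f) functr \<Rightarrow> ('a, 'b, 'c, 'd) functr \<Rightarrow> ('a, 'b, 'e, 'f) functr" where
  "functor_comp G F = \<lparr>omap = (\<lambda>x. omap G (omap F x)), fmap = (\<lambda>f. fmap G (fmap F f))\<rparr>"

definition is_nat_trans ::
  "('a, 'b) category \<Rightarrow> ('c, 'd) category \<Rightarrow> ('a, 'b, 'c, 'd) functr \<Rightarrow>
   ('a, 'b, 'c, 'd) functr \<Rightarrow> ('a \<Rightarrow> 'd) \<Rightarrow> bool" where
  "is_nat_trans C D F G tau \<longleftrightarrow>
     is_functor C D F \<and> is_functor C D G \<and>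
     (\<forall>a \<in> Obj C. tau a \<in> Hom D (omap F a) (omap G a)) \<and>
     (\<forall>a \<in> Obj C. \<forall>b \<in> Obj C. \<forall>f \<in> Hom C a b.
        cmp D (tau b) (fmap F f) = cmp D (fmap G f) (tau a))"

definition is_adjunction ::
  "('a, 'b) category \<Rightarrow> ('c, 'd) category \<Rightarrow> ('a, 'b, 'c, 'd) functr \<Rightarrow>
   ('c, 'd, 'a, 'b) functr \<Rightarrow> ('a \<Rightarrow> 'b) \<Rightarrow> ('c \<Rightarrow> 'd) \<Rightarrow> bool" where
  "is_adjunction C D F G eta eps \<longleftrightarrow>
     is_functor C D F \<and> is_functor D C G \<and>
     is_nat_trans C C id_functor (functor_comp G F) eta \<and>
     is_nat_trans D D (functor_comp F G) id_functor eps \<and>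
     (\<forall>a \<in> Obj C. cmp D (eps (omap F a)) (fmap F (eta a)) = ident D (omap F a)) \<and>
     (\<forall>d \<in> Obj D. cmp C (fmap G (eps d)) (eta (omap G d)) = ident C (omap G d))"

text \<open>Naturally full functor: a natural (in both variables) section P of the map
  Hom_C(A,A') \<rightarrow> Hom_D(FA,FA'), f \<mapsto> F f.\<close>
definition naturally_full ::
  "('a, 'b) category \<Rightarrow> ('c, 'd) category \<Rightarrow> ('a, 'b, 'c, 'd) functr \<Rightarrow> bool" where
  "naturally_full C D F \<longleftrightarrow> is_functor C D F \<and>
     (\<exists>P :: 'a \<Rightarrow> 'a \<Rightarrow> 'd \<Rightarrow> 'b.
        (\<forall>a \<in> Obj C. \<forall>a' \<in> Obj C. \<forall>u \<in> Hom D (omap F a) (omap F a').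
           P a a' u \<in> Hom C a a' \<and> fmap F (P a a' u) = u) \<and>
        (\<forall>a \<in> Obj C. \<forall>a' \<in> Obj C. \<forall>b \<in> Obj C. \<forall>b' \<in> Obj C.
           \<forall>f \<in> Hom C b a. \<forall>g \<in> Hom C a' b'. \<forall>u \<in> Hom D (omap F a) (omap F a').
           P b b' (cmp D (cmp D (fmap F g) u) (fmap F f)) = cmp C (cmp C g (P a a' u)) f))"

end

theory Submission
  imports Defs
begin

lemma Hom_iff: "f \<in> Hom C a b \<longleftrightarrow> f \<in> Arr C \<and> src C f = a \<and> tgt C f = b"
  by (simp add: Hom_def)

lemma fc_simps[simp]: "omap (functor_comp G F) x = omap G (omap F x)"
  "fmap (functor_comp G F) f = fmap G (fmap F f)"
  "omap id_functor x = x" "fmap id_functor f = f"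
  by (simp_all add: functor_comp_def id_functor_def)

context
  fixes C :: "('o,'m) category"
  assumes cat: "is_category C"
begin

lemma cat_src[simp]: "f \<in> Arr C \<Longrightarrow> src C f \<in> Obj C"
  and cat_tgt[simp]: "f \<in> Arr C \<Longrightarrow> tgt C f \<in> Obj C"
  using cat unfolding is_category_def by auto

lemma cat_id[simp]: "a \<in> Obj C \<Longrightarrow> ident C a \<in> Arr C"
  "a \<in> Obj C \<Longrightarrow> src C (ident C a) = a"
  "a \<in> Obj C \<Longrightarrow> tgt C (ident C a) = a"
  using cat unfolding is_category_def Hom_def by auto

lemma cat_cmp[simp]:
  assumes "f \<in> Arr C" "g \<in> Arr C" "src C g = tgt C f"
  shows "cmp C g f \<in> Arr C" "src C (cmp C g f) = src C f" "tgt C (cmp C g f) = tgt C g"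
proof -
  have "\<forall>a \<in> Obj C. \<forall>b \<in> Obj C. \<forall>c \<in> Obj C. \<forall>f \<in> Hom C a b. \<forall>g \<in> Hom C b c.
        cmp C g f \<in> Hom C a c" using cat unfolding is_category_def by blast
  moreover have "src C f \<in> Obj C" "tgt C f \<in> Obj C" "tgt C g \<in> Obj C" using assms by auto
  moreover have "f \<in> Hom C (src C f) (tgt C f)" "g \<in> Hom C (tgt C f) (tgt C g)"
    using assms by (auto simp: Hom_def)
  ultimately have "cmp C g f \<in> Hom C (src C f) (tgt C g)" by blast
  then show "cmp C g f \<in> Arr C" "src C (cmp C g f) = src C f" "tgt C (cmp C g f) = tgt C g"
    by (auto simp: Hom_def)
qed

lemma cat_idlr: "f \<in> Arr C \<Longrightarrow> cmp C (ident C (tgt C f)) f = f \<and> cmp C f (ident C (src C f)) = f"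
proof -
  assume f: "f \<in> Arr C"
  have "\<forall>a \<in> Obj C. \<forall>b \<in> Obj C. \<forall>f \<in> Hom C a b.
        cmp C f (ident C a) = f \<and> cmp C (ident C b) f = f" using cat unfolding is_category_def by blast
  moreover have "src C f \<in> Obj C" "tgt C f \<in> Obj C" "f \<in> Hom C (src C f) (tgt C f)"
    using f by (auto simp: Hom_def)
  ultimately show ?thesis by blast
qed

lemma cat_idl[simp]: "f \<in> Arr C \<Longrightarrow> a = tgt C f \<Longrightarrow> cmp C (ident C a) f = f"
  and cat_idr[simp]: "f \<in> Arr C \<Longrightarrow> a = src C f \<Longrightarrow> cmp C f (ident C a) = f"
  using cat_idlr by auto

lemma cat_assoc[simp]:
  assumes "f \<in> Arr C" "g \<in> Arr C" "h \<in> Arr C" "src C g = tgt C f" "src C h = tgt C g"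
  shows "cmp C (cmp C h g) f = cmp C h (cmp C g f)"
proof -
  have "\<forall>a \<in> Obj C. \<forall>b \<in> Obj C. \<forall>c \<in> Obj C. \<forall>d \<in> Obj C.
        \<forall>f \<in> Hom C a b. \<forall>g \<in> Hom C b c. \<forall>h \<in> Hom C c d.
        cmp C h (cmp C g f) = cmp C (cmp C h g) f" using cat unfolding is_category_def by blast
  moreover have "src C f \<in> Obj C" "tgt C f \<in> Obj C" "tgt C g \<in> Obj C" "tgt C h \<in> Obj C" using assms by auto
  moreover have "f \<in> Hom C (src C f) (tgt C f)" "g \<in> Hom C (tgt C f) (tgt C g)" "h \<in> Hom C (tgt C g) (tgt C h)"
    using assms by (auto simp: Hom_def)
  ultimately have "cmp C h (cmp C g f) = cmp C (cmp C h g) f" by blast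
  then show ?thesis by simp
qed

lemma cat_ext:
  assumes e: "cmp C g f = cmp C k h"
    and a: "f \<in> Arr C" "g \<in> Arr C" "h \<in> Arr C" "k \<in> Arr C" "src C g = tgt C f" "src C k = tgt C h"
      "y \<in> Arr C" "tgt C y = src C f"
  shows "cmp C g (cmp C f y) = cmp C k (cmp C h y)"
proof -
  have "src C h = src C f" using e a by (metis cat_cmp(2))
  then have "cmp C g (cmp C f y) = cmp C (cmp C g f) y" "cmp C k (cmp C h y) = cmp C (cmp C k h) y"
    using a cat_assoc by (metis, metis)
  then show ?thesis using e by simp
qed

end

context
  fixes C :: "('a,'b) category" and D :: "('c,'d) category" and F :: "('a,'b,'c,'d) functr"
  assumes fu: "is_functor C D F"
begin

lemma fun_obj[simp]: "a \<in> Obj C \<Longrightarrow> omap F a \<in> Obj D"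
  using fu unfolding is_functor_def by auto

lemma fun_arr[simp]: "f \<in> Arr C \<Longrightarrow> fmap F f \<in> Arr D"
  "f \<in> Arr C \<Longrightarrow> src D (fmap F f) = omap F (src C f)"
  "f \<in> Arr C \<Longrightarrow> tgt D (fmap F f) = omap F (tgt C f)"
proof -
  assume f: "f \<in> Arr C"
  have c: "is_category C" using fu unfolding is_functor_def by auto
  have "\<forall>a \<in> Obj C. \<forall>b \<in> Obj C. \<forall>f \<in> Hom C a b. fmap F f \<in> Hom D (omap F a) (omap F b)"
    using fu unfolding is_functor_def by blast
  moreover have "src C f \<in> Obj C" "tgt C f \<in> Obj C" "f \<in> Hom C (src C f) (tgt C f)"
    using f c by (auto simp: Hom_def)
  ultimately have "fmap F f \<in> Hom D (omap F (src C f)) (omap F (tgt C f))" by blast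
  then show "fmap F f \<in> Arr D" "src D (fmap F f) = omap F (src C f)" "tgt D (fmap F f) = omap F (tgt C f)"
    by (auto simp: Hom_def)
qed

lemma fun_id[simp]: "a \<in> Obj C \<Longrightarrow> fmap F (ident C a) = ident D (omap F a)"
  using fu unfolding is_functor_def by auto

lemma fun_cmp[simp]: "f \<in> Arr C \<Longrightarrow> g \<in> Arr C \<Longrightarrow> src C g = tgt C f \<Longrightarrow>
   fmap F (cmp C g f) = cmp D (fmap F g) (fmap F f)"
proof -
  assume a: "f \<in> Arr C" "g \<in> Arr C" "src C g = tgt C f"
  have c: "is_category C" using fu unfolding is_functor_def by auto
  have "\<forall>a \<in> Obj C. \<forall>b \<in> Obj C. \<forall>c \<in> Obj C. \<forall>f \<in> Hom C a b. \<forall>g \<in> Hom C b c.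
        fmap F (cmp C g f) = cmp D (fmap F g) (fmap F f)" using fu unfolding is_functor_def by blast
  moreover have "src C f \<in> Obj C" "tgt C f \<in> Obj C" "tgt C g \<in> Obj C" using a c by auto
  moreover have "f \<in> Hom C (src C f) (tgt C f)" "g \<in> Hom C (tgt C f) (tgt C g)"
    using a by (auto simp: Hom_def)
  ultimately show ?thesis by blast
qed

end

context
  fixes C :: "('a,'b) category" and D :: "('c,'d) category" and F G :: "('a,'b,'c,'d) functr"
    and tau :: "'a \<Rightarrow> 'd"
  assumes nt: "is_nat_trans C D F G tau"
begin

lemma nt_arr[simp]: "a \<in> Obj C \<Longrightarrow> tau a \<in> Arr D"
  "a \<in> Obj C \<Longrightarrow> src D (tau a) = omap F a"
  "a \<in> Obj C \<Longrightarrow> tgt D (tau a) = omap G a"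
  using nt unfolding is_nat_trans_def Hom_def by auto

lemma nt_nat: "f \<in> Arr C \<Longrightarrow> cmp D (tau (tgt C f)) (fmap F f) = cmp D (fmap G f) (tau (src C f))"
proof -
  assume f: "f \<in> Arr C"
  have c: "is_category C" using nt unfolding is_nat_trans_def is_functor_def by auto
  show ?thesis using nt f cat_src[OF c f] cat_tgt[OF c f] unfolding is_nat_trans_def Hom_def by auto
qed

end

lemma nt_intro:
  assumes "is_functor C D F" "is_functor C D G"
    "\<And>a. a \<in> Obj C \<Longrightarrow> tau a \<in> Arr D \<and> src D (tau a) = omap F a \<and> tgt D (tau a) = omap G a"
    "\<And>f. f \<in> Arr C \<Longrightarrow> cmp D (tau (tgt C f)) (fmap F f) = cmp D (fmap G f) (tau (src C f))"
  shows "is_nat_trans C D F G tau"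
  using assms unfolding is_nat_trans_def Hom_def by auto


locale frob =
  fixes C :: "('a, 'b) category" and D :: "('c, 'd) category"
    and F :: "('a, 'b, 'c, 'd) functr" and G :: "('c, 'd, 'a, 'b) functr"
    and eta :: "'a \<Rightarrow> 'b" and eps :: "'c \<Rightarrow> 'd"
    and nu :: "'c \<Rightarrow> 'd" and mu :: "'a \<Rightarrow> 'b"
  assumes FG: "is_adjunction C D F G eta eps"
    and GF: "is_adjunction D C G F nu mu"
begin

lemma fF: "is_functor C D F" and fG: "is_functor D C G"
  and cC: "is_category C" and cD: "is_category D"
  and ntEta: "is_nat_trans C C id_functor (functor_comp G F) eta"
  and ntEps: "is_nat_trans D D (functor_comp F G) id_functor eps"
  and ntNu: "is_nat_trans D D id_functor (functor_comp F G) nu"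
  and ntMu: "is_nat_trans C C (functor_comp G F) id_functor mu"
  using FG GF unfolding is_adjunction_def is_functor_def by auto

lemma tri1: "c \<in> Obj C \<Longrightarrow> cmp D (eps (omap F c)) (fmap F (eta c)) = ident D (omap F c)"
  and tri2: "d \<in> Obj D \<Longrightarrow> cmp C (fmap G (eps d)) (eta (omap G d)) = ident C (omap G d)"
  and tri3: "d \<in> Obj D \<Longrightarrow> cmp C (mu (omap G d)) (fmap G (nu d)) = ident C (omap G d)"
  and tri4: "c \<in> Obj C \<Longrightarrow> cmp D (fmap F (mu c)) (nu (omap F c)) = ident D (omap F c)"
  using FG GF unfolding is_adjunction_def by auto

lemmas [simp] = cat_src[OF cC] cat_tgt[OF cC] cat_id[OF cC] cat_cmp[OF cC] cat_idl[OF cC] cat_idr[OF cC]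
  cat_src[OF cD] cat_tgt[OF cD] cat_id[OF cD] cat_cmp[OF cD] cat_idl[OF cD] cat_idr[OF cD]
  fun_obj[OF fF] fun_arr[OF fF] fun_id[OF fF] fun_cmp[OF fF]
  fun_obj[OF fG] fun_arr[OF fG] fun_id[OF fG] fun_cmp[OF fG]
  nt_arr[OF ntEta] nt_arr[OF ntEps] nt_arr[OF ntNu] nt_arr[OF ntMu]

lemmas aC = cat_assoc[OF cC] and aD = cat_assoc[OF cD]
lemmas xC = cat_ext[OF cC] and xD = cat_ext[OF cD]

lemma xCi:
  assumes e: "cmp C g f = ident C a" and a: "a \<in> Obj C" "f \<in> Arr C" "g \<in> Arr C" "src C g = tgt C f"
    "y \<in> Arr C" "tgt C y = src C f"
  shows "cmp C g (cmp C f y) = y"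
proof -
  have "src C f = a" using e a by (metis cat_cmp(2)[OF cC] cat_id(2)[OF cC])
  then show ?thesis using e a aC[of y f g] by simp
qed

lemma etaN: "f \<in> Arr C \<Longrightarrow> cmp C (eta (tgt C f)) f = cmp C (fmap G (fmap F f)) (eta (src C f))"
  using nt_nat[OF ntEta] by simp
lemma epsN: "g \<in> Arr D \<Longrightarrow> cmp D (eps (tgt D g)) (fmap F (fmap G g)) = cmp D g (eps (src D g))"
  using nt_nat[OF ntEps] by simp
lemma nuN: "g \<in> Arr D \<Longrightarrow> cmp D (nu (tgt D g)) g = cmp D (fmap F (fmap G g)) (nu (src D g))"
  using nt_nat[OF ntNu] by simp
lemma muN: "f \<in> Arr C \<Longrightarrow> cmp C (mu (tgt C f)) (fmap G (fmap F f)) = cmp C f (mu (src C f))"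
  using nt_nat[OF ntMu] by simp

lemma fGF: "is_functor C C (functor_comp G F)" and fid: "is_functor C C id_functor"
  using ntEta unfolding is_nat_trans_def by auto

definition isP where "isP p \<longleftrightarrow> is_nat_trans C C (functor_comp G F) id_functor p \<and>
   (\<forall>c \<in> Obj C. cmp C (eta c) (p c) = ident C (omap G (omap F c)))"
definition isQ where "isQ q \<longleftrightarrow> is_nat_trans C C id_functor (functor_comp G F) q \<and>
   (\<forall>c \<in> Obj C. cmp C (q c) (mu c) = ident C (omap G (omap F c)))"

lemma adj_inj1:
  assumes v: "v \<in> Arr D" "src D v = omap F x" "x \<in> Obj C"
  shows "cmp D (eps (tgt D v)) (fmap F (cmp C (fmap G v) (eta x))) = v"
proof -
  have "cmp D (eps (tgt D v)) (fmap F (cmp C (fmap G v) (eta x)))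
      = cmp D (cmp D (eps (tgt D v)) (fmap F (fmap G v))) (fmap F (eta x))"
    using v by (simp add: aD)
  also have "\<dots> = cmp D (cmp D v (eps (omap F x))) (fmap F (eta x))"
    using epsN[OF v(1)] v by simp
  also have "\<dots> = cmp D v (cmp D (eps (omap F x)) (fmap F (eta x)))"
    using v by (simp add: aD)
  also have "\<dots> = v" using v tri1 by simp
  finally show ?thesis .
qed

lemma adj_inj2:
  assumes v: "v \<in> Arr D" "tgt D v = omap F x" "x \<in> Obj C"
  shows "cmp D (fmap F (cmp C (mu x) (fmap G v))) (nu (src D v)) = v"
proof -
  have "cmp D (fmap F (cmp C (mu x) (fmap G v))) (nu (src D v))
      = cmp D (fmap F (mu x)) (cmp D (fmap F (fmap G v)) (nu (src D v)))"
    using v by (simp add: aD)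
  also have "\<dots> = cmp D (fmap F (mu x)) (cmp D (nu (omap F x)) v)"
    using nuN[OF v(1)] v by simp
  also have "\<dots> = cmp D (cmp D (fmap F (mu x)) (nu (omap F x))) v"
    using v by (simp add: aD)
  also have "\<dots> = v" using v tri4 by simp
  finally show ?thesis .
qed

lemma Fp:
  assumes p: "isP p" and c: "c \<in> Obj C"
  shows "fmap F (p c) = eps (omap F c)"
proof -
  have nt: "is_nat_trans C C (functor_comp G F) id_functor p"
    and s: "cmp C (eta c) (p c) = ident C (omap G (omap F c))" using p c unfolding isP_def by auto
  note pa = nt_arr[OF nt, simplified]
  have pc: "p c \<in> Arr C" "src C (p c) = omap G (omap F c)" "tgt C (p c) = c" using pa c by auto
  have 1: "cmp C (fmap G (fmap F (p c))) (eta (omap G (omap F c))) = ident C (omap G (omap F c))"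
    using etaN[OF pc(1)] pc s by simp
  have "fmap F (p c) = cmp D (eps (omap F c)) (fmap F (cmp C (fmap G (fmap F (p c))) (eta (omap G (omap F c)))))"
    using adj_inj1[of "fmap F (p c)" "omap G (omap F c)"] pc c by simp
  also have "\<dots> = eps (omap F c)" using 1 c by simp
  finally show ?thesis .
qed

lemma Fq:
  assumes q: "isQ q" and c: "c \<in> Obj C"
  shows "fmap F (q c) = nu (omap F c)"
proof -
  have nt: "is_nat_trans C C id_functor (functor_comp G F) q"
    and s: "cmp C (q c) (mu c) = ident C (omap G (omap F c))" using q c unfolding isQ_def by auto
  note pa = nt_arr[OF nt, simplified]
  have pc: "q c \<in> Arr C" "src C (q c) = c" "tgt C (q c) = omap G (omap F c)" using pa c by auto
  have 1: "cmp C (mu (omap G (omap F c))) (fmap G (fmap F (q c))) = ident C (omap G (omap F c))"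
    using muN[OF pc(1)] pc s by simp
  have "fmap F (q c) = cmp D (fmap F (cmp C (mu (omap G (omap F c))) (fmap G (fmap F (q c))))) (nu (omap F c))"
    using adj_inj2[of "fmap F (q c)" "omap G (omap F c)"] pc c by simp
  also have "\<dots> = nu (omap F c)" using 1 c by simp
  finally show ?thesis .
qed


lemma P_nf:
  assumes p: "isP p"
  shows "naturally_full C D F"
proof -
  have nt: "is_nat_trans C C (functor_comp G F) id_functor p" using p unfolding isP_def by auto
  note pa[simp] = nt_arr[OF nt, simplified]
  show ?thesis unfolding naturally_full_def
  proof (intro conjI fF exI[of _ "\<lambda>a a' u. cmp C (p a') (cmp C (fmap G u) (eta a))"] ballI)
    fix a a' u assume a: "a \<in> Obj C" "a' \<in> Obj C" and u: "u \<in> Hom D (omap F a) (omap F a')"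
    have u': "u \<in> Arr D" "src D u = omap F a" "tgt D u = omap F a'" using u by (auto simp: Hom_iff)
    show "cmp C (p a') (cmp C (fmap G u) (eta a)) \<in> Hom C a a'"
      using a u' by (simp add: Hom_iff)
  next
    fix a a' u assume a: "a \<in> Obj C" "a' \<in> Obj C" and u: "u \<in> Hom D (omap F a) (omap F a')"
    have u': "u \<in> Arr D" "src D u = omap F a" "tgt D u = omap F a'" using u by (auto simp: Hom_iff)
    show "fmap F (cmp C (p a') (cmp C (fmap G u) (eta a))) = u"
      using a u' adj_inj1[OF u'(1,2) a(1)] by (simp add: Hom_iff Fp[OF p])
  next
    fix a a' b b' f g u assume o: "a \<in> Obj C" "a' \<in> Obj C" "b \<in> Obj C" "b' \<in> Obj C"
      and f: "f \<in> Hom C b a" and g: "g \<in> Hom C a' b'" and u: "u \<in> Hom D (omap F a) (omap F a')"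
    have u': "u \<in> Arr D" "src D u = omap F a" "tgt D u = omap F a'" using u by (auto simp: Hom_iff)
    have f': "f \<in> Arr C" "src C f = b" "tgt C f = a" using f by (auto simp: Hom_iff)
    have g': "g \<in> Arr C" "src C g = a'" "tgt C g = b'" using g by (auto simp: Hom_iff)
    have pn: "cmp C (p b') (fmap G (fmap F g)) = cmp C g (p a')" using nt_nat[OF nt g'(1)] g' by simp
    have en: "cmp C (fmap G (fmap F f)) (eta b) = cmp C (eta a) f" using etaN[OF f'(1)] f' by simp
    show "cmp C (p b') (cmp C (fmap G (cmp D (cmp D (fmap F g) u) (fmap F f))) (eta b)) =
          cmp C (cmp C g (cmp C (p a') (cmp C (fmap G u) (eta a)))) f"
      using o u' f' g' by (simp add: aC xC[OF pn] en)
  qed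
qed

lemma Q_nf:
  assumes q: "isQ q"
  shows "naturally_full C D F"
proof -
  have nt: "is_nat_trans C C id_functor (functor_comp G F) q" using q unfolding isQ_def by auto
  note pa[simp] = nt_arr[OF nt, simplified]
  show ?thesis unfolding naturally_full_def
  proof (intro conjI fF exI[of _ "\<lambda>a a' u. cmp C (mu a') (cmp C (fmap G u) (q a))"] ballI)
    fix a a' u assume a: "a \<in> Obj C" "a' \<in> Obj C" and u: "u \<in> Hom D (omap F a) (omap F a')"
    have u': "u \<in> Arr D" "src D u = omap F a" "tgt D u = omap F a'" using u by (auto simp: Hom_iff)
    show "cmp C (mu a') (cmp C (fmap G u) (q a)) \<in> Hom C a a'"
      using a u' by (simp add: Hom_iff)
  next
    fix a a' u assume a: "a \<in> Obj C" "a' \<in> Obj C" and u: "u \<in> Hom D (omap F a) (omap F a')"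
    have u': "u \<in> Arr D" "src D u = omap F a" "tgt D u = omap F a'" using u by (auto simp: Hom_iff)
    show "fmap F (cmp C (mu a') (cmp C (fmap G u) (q a))) = u"
      using a u' adj_inj2[OF u'(1,3) a(2)] by (simp add: Hom_iff Fq[OF q] aD)
  next
    fix a a' b b' f g u assume o: "a \<in> Obj C" "a' \<in> Obj C" "b \<in> Obj C" "b' \<in> Obj C"
      and f: "f \<in> Hom C b a" and g: "g \<in> Hom C a' b'" and u: "u \<in> Hom D (omap F a) (omap F a')"
    have u': "u \<in> Arr D" "src D u = omap F a" "tgt D u = omap F a'" using u by (auto simp: Hom_iff)
    have f': "f \<in> Arr C" "src C f = b" "tgt C f = a" using f by (auto simp: Hom_iff)
    have g': "g \<in> Arr C" "src C g = a'" "tgt C g = b'" using g by (auto simp: Hom_iff)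
    have pn: "cmp C (mu b') (fmap G (fmap F g)) = cmp C g (mu a')" using muN[OF g'(1)] g' by simp
    have en: "cmp C (fmap G (fmap F f)) (q b) = cmp C (q a) f" using nt_nat[OF nt f'(1)] f' by simp
    show "cmp C (mu b') (cmp C (fmap G (cmp D (cmp D (fmap F g) u) (fmap F f))) (q b)) =
          cmp C (cmp C g (cmp C (mu a') (cmp C (fmap G u) (q a)))) f"
      using o u' f' g' by (simp add: aC xC[OF pn] en)
  qed
qed


lemma nf_elim:
  assumes "naturally_full C D F"
  obtains P where
    "\<And>a a' u. a \<in> Obj C \<Longrightarrow> a' \<in> Obj C \<Longrightarrow> u \<in> Arr D \<Longrightarrow> src D u = omap F a \<Longrightarrow> tgt D u = omap F a' \<Longrightarrow>
       P a a' u \<in> Arr C \<and> src C (P a a' u) = a \<and> tgt C (P a a' u) = a' \<and> fmap F (P a a' u) = u"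
    "\<And>a a' b b' f g u. a \<in> Obj C \<Longrightarrow> a' \<in> Obj C \<Longrightarrow> b \<in> Obj C \<Longrightarrow> b' \<in> Obj C \<Longrightarrow>
       f \<in> Arr C \<Longrightarrow> src C f = b \<Longrightarrow> tgt C f = a \<Longrightarrow> g \<in> Arr C \<Longrightarrow> src C g = a' \<Longrightarrow> tgt C g = b' \<Longrightarrow>
       u \<in> Arr D \<Longrightarrow> src D u = omap F a \<Longrightarrow> tgt D u = omap F a' \<Longrightarrow>
       P b b' (cmp D (cmp D (fmap F g) u) (fmap F f)) = cmp C (cmp C g (P a a' u)) f"
proof -
  obtain P where P1: "\<forall>a \<in> Obj C. \<forall>a' \<in> Obj C. \<forall>u \<in> Hom D (omap F a) (omap F a').
           P a a' u \<in> Hom C a a' \<and> fmap F (P a a' u) = u"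
    and P2: "\<forall>a \<in> Obj C. \<forall>a' \<in> Obj C. \<forall>b \<in> Obj C. \<forall>b' \<in> Obj C.
           \<forall>f \<in> Hom C b a. \<forall>g \<in> Hom C a' b'. \<forall>u \<in> Hom D (omap F a) (omap F a').
           P b b' (cmp D (cmp D (fmap F g) u) (fmap F f)) = cmp C (cmp C g (P a a' u)) f"
    using assms unfolding naturally_full_def by blast
  show ?thesis
  proof (rule that)
    show "\<And>a a' u. a \<in> Obj C \<Longrightarrow> a' \<in> Obj C \<Longrightarrow> u \<in> Arr D \<Longrightarrow> src D u = omap F a \<Longrightarrow> tgt D u = omap F a' \<Longrightarrow>
       P a a' u \<in> Arr C \<and> src C (P a a' u) = a \<and> tgt C (P a a' u) = a' \<and> fmap F (P a a' u) = u"
    proof -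
      fix a a' u assume h: "a \<in> Obj C" "a' \<in> Obj C" "u \<in> Arr D" "src D u = omap F a" "tgt D u = omap F a'"
      then have "u \<in> Hom D (omap F a) (omap F a')" by (simp add: Hom_iff)
      with P1 h have "P a a' u \<in> Hom C a a' \<and> fmap F (P a a' u) = u" by blast
      then show "P a a' u \<in> Arr C \<and> src C (P a a' u) = a \<and> tgt C (P a a' u) = a' \<and> fmap F (P a a' u) = u"
        by (simp add: Hom_iff)
    qed
    show "\<And>a a' b b' f g u. a \<in> Obj C \<Longrightarrow> a' \<in> Obj C \<Longrightarrow> b \<in> Obj C \<Longrightarrow> b' \<in> Obj C \<Longrightarrow>
       f \<in> Arr C \<Longrightarrow> src C f = b \<Longrightarrow> tgt C f = a \<Longrightarrow> g \<in> Arr C \<Longrightarrow> src C g = a' \<Longrightarrow> tgt C g = b' \<Longrightarrow>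
       u \<in> Arr D \<Longrightarrow> src D u = omap F a \<Longrightarrow> tgt D u = omap F a' \<Longrightarrow>
       P b b' (cmp D (cmp D (fmap F g) u) (fmap F f)) = cmp C (cmp C g (P a a' u)) f"
    proof -
      fix a a' b b' f g u assume h: "a \<in> Obj C" "a' \<in> Obj C" "b \<in> Obj C" "b' \<in> Obj C"
       "f \<in> Arr C" "src C f = b" "tgt C f = a" "g \<in> Arr C" "src C g = a'" "tgt C g = b'"
       "u \<in> Arr D" "src D u = omap F a" "tgt D u = omap F a'"
      then have "u \<in> Hom D (omap F a) (omap F a')" "f \<in> Hom C b a" "g \<in> Hom C a' b'" by (simp_all add: Hom_iff)
      with P2 h show "P b b' (cmp D (cmp D (fmap F g) u) (fmap F f)) = cmp C (cmp C g (P a a' u)) f" by blast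
    qed
  qed
qed

lemma nf_P:
  assumes nf: "naturally_full C D F"
  shows "\<exists>p. isP p"
proof -
  obtain P where P1: "\<And>a a' u. a \<in> Obj C \<Longrightarrow> a' \<in> Obj C \<Longrightarrow> u \<in> Arr D \<Longrightarrow> src D u = omap F a \<Longrightarrow> tgt D u = omap F a' \<Longrightarrow>
       P a a' u \<in> Arr C \<and> src C (P a a' u) = a \<and> tgt C (P a a' u) = a' \<and> fmap F (P a a' u) = u"
    and P2: "\<And>a a' b b' f g u. a \<in> Obj C \<Longrightarrow> a' \<in> Obj C \<Longrightarrow> b \<in> Obj C \<Longrightarrow> b' \<in> Obj C \<Longrightarrow>
       f \<in> Arr C \<Longrightarrow> src C f = b \<Longrightarrow> tgt C f = a \<Longrightarrow> g \<in> Arr C \<Longrightarrow> src C g = a' \<Longrightarrow> tgt C g = b' \<Longrightarrow>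
       u \<in> Arr D \<Longrightarrow> src D u = omap F a \<Longrightarrow> tgt D u = omap F a' \<Longrightarrow>
       P b b' (cmp D (cmp D (fmap F g) u) (fmap F f)) = cmp C (cmp C g (P a a' u)) f"
    using nf_elim[OF nf] by blast
  define p where "p c = P (omap G (omap F c)) c (eps (omap F c))" for c
  have pc: "p c \<in> Arr C \<and> src C (p c) = omap G (omap F c) \<and> tgt C (p c) = c \<and> fmap F (p c) = eps (omap F c)"
    if c: "c \<in> Obj C" for c
    unfolding p_def by (rule P1) (use c in simp_all)
  have "is_nat_trans C C (functor_comp G F) id_functor p"
  proof (rule nt_intro[OF fGF fid])
    show "\<And>a. a \<in> Obj C \<Longrightarrow> p a \<in> Arr C \<and> src C (p a) = omap (functor_comp G F) a \<and> tgt C (p a) = omap id_functor a"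
      using pc by simp
  next
    fix f assume f: "f \<in> Arr C"
    define a where "a = src C f"
    define b where "b = tgt C f"
    have ab: "a \<in> Obj C" "b \<in> Obj C" "src C f = a" "tgt C f = b" using f unfolding a_def b_def by auto
    have e1: "P (omap G (omap F a)) b (cmp D (cmp D (fmap F f) (eps (omap F a))) (fmap F (ident C (omap G (omap F a)))))
          = cmp C (cmp C f (p a)) (ident C (omap G (omap F a)))"
      unfolding p_def by (rule P2) (use ab f in simp_all)
    have e2: "P (omap G (omap F a)) b (cmp D (cmp D (fmap F (ident C b)) (eps (omap F b))) (fmap F (fmap G (fmap F f))))
          = cmp C (cmp C (ident C b) (p b)) (fmap G (fmap F f))"
      unfolding p_def by (rule P2) (use ab f in simp_all)
    have e3: "cmp D (eps (omap F b)) (fmap F (fmap G (fmap F f))) = cmp D (fmap F f) (eps (omap F a))"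
      using epsN[of "fmap F f"] f ab by simp
    have "cmp C (p b) (fmap G (fmap F f)) = cmp C f (p a)"
      using e1 e2 e3 ab f pc by simp
    then show "cmp C (p (tgt C f)) (fmap (functor_comp G F) f) = cmp C (fmap id_functor f) (p (src C f))"
      using ab by simp
  qed
  moreover have "cmp C (eta c) (p c) = ident C (omap G (omap F c))" if c: "c \<in> Obj C" for c
  proof -
    have "cmp C (eta c) (p c) = cmp C (fmap G (fmap F (p c))) (eta (omap G (omap F c)))"
      using etaN[of "p c"] pc[OF c] by simp
    also have "\<dots> = ident C (omap G (omap F c))" using pc[OF c] tri2[of "omap F c"] c by simp
    finally show ?thesis .
  qed
  ultimately show ?thesis unfolding isP_def by blast
qed

lemma nf_Q:
  assumes nf: "naturally_full C D F"
  shows "\<exists>q. isQ q"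
proof -
  obtain P where P1: "\<And>a a' u. a \<in> Obj C \<Longrightarrow> a' \<in> Obj C \<Longrightarrow> u \<in> Arr D \<Longrightarrow> src D u = omap F a \<Longrightarrow> tgt D u = omap F a' \<Longrightarrow>
       P a a' u \<in> Arr C \<and> src C (P a a' u) = a \<and> tgt C (P a a' u) = a' \<and> fmap F (P a a' u) = u"
    and P2: "\<And>a a' b b' f g u. a \<in> Obj C \<Longrightarrow> a' \<in> Obj C \<Longrightarrow> b \<in> Obj C \<Longrightarrow> b' \<in> Obj C \<Longrightarrow>
       f \<in> Arr C \<Longrightarrow> src C f = b \<Longrightarrow> tgt C f = a \<Longrightarrow> g \<in> Arr C \<Longrightarrow> src C g = a' \<Longrightarrow> tgt C g = b' \<Longrightarrow>
       u \<in> Arr D \<Longrightarrow> src D u = omap F a \<Longrightarrow> tgt D u = omap F a' \<Longrightarrow>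
       P b b' (cmp D (cmp D (fmap F g) u) (fmap F f)) = cmp C (cmp C g (P a a' u)) f"
    using nf_elim[OF nf] by blast
  define q where "q c = P c (omap G (omap F c)) (nu (omap F c))" for c
  have qc: "q c \<in> Arr C \<and> src C (q c) = c \<and> tgt C (q c) = omap G (omap F c) \<and> fmap F (q c) = nu (omap F c)"
    if c: "c \<in> Obj C" for c
    unfolding q_def by (rule P1) (use c in simp_all)
  have "is_nat_trans C C id_functor (functor_comp G F) q"
  proof (rule nt_intro[OF fid fGF])
    show "\<And>a. a \<in> Obj C \<Longrightarrow> q a \<in> Arr C \<and> src C (q a) = omap id_functor a \<and> tgt C (q a) = omap (functor_comp G F) a"
      using qc by simp
  next
    fix f assume f: "f \<in> Arr C"
    define a where "a = src C f"
    define b where "b = tgt C f"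
    have ab: "a \<in> Obj C" "b \<in> Obj C" "src C f = a" "tgt C f = b" using f unfolding a_def b_def by auto
    have e1: "P a (omap G (omap F b)) (cmp D (cmp D (fmap F (ident C (omap G (omap F b)))) (nu (omap F b))) (fmap F f))
          = cmp C (cmp C (ident C (omap G (omap F b))) (q b)) f"
      unfolding q_def by (rule P2) (use ab f in simp_all)
    have e2: "P a (omap G (omap F b)) (cmp D (cmp D (fmap F (fmap G (fmap F f))) (nu (omap F a))) (fmap F (ident C a)))
          = cmp C (cmp C (fmap G (fmap F f)) (q a)) (ident C a)"
      unfolding q_def by (rule P2) (use ab f in simp_all)
    have e3: "cmp D (nu (omap F b)) (fmap F f) = cmp D (fmap F (fmap G (fmap F f))) (nu (omap F a))"
      using nuN[of "fmap F f"] f ab by simp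
    have "cmp C (q b) f = cmp C (fmap G (fmap F f)) (q a)"
      using e1 e2 e3 ab f qc by simp
    then show "cmp C (q (tgt C f)) (fmap id_functor f) = cmp C (fmap (functor_comp G F) f) (q (src C f))"
      using ab by simp
  qed
  moreover have "cmp C (q c) (mu c) = ident C (omap G (omap F c))" if c: "c \<in> Obj C" for c
  proof -
    have "cmp C (q c) (mu c) = cmp C (mu (omap G (omap F c))) (fmap G (fmap F (q c)))"
      using muN[of "q c"] qc[OF c] by simp
    also have "\<dots> = ident C (omap G (omap F c))" using qc[OF c] tri3[of "omap F c"] c by simp
    finally show ?thesis .
  qed
  ultimately show ?thesis unfolding isQ_def by blast
qed


lemma B2a:
  assumes nt: "is_nat_trans D C G G alpha"
    and s: "\<forall>c \<in> Obj C. cmp C (cmp C (eta c) (mu c)) (alpha (omap F c)) = ident C (omap G (omap F c))"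
  shows "isP (\<lambda>c. cmp C (mu c) (alpha (omap F c)))"
  unfolding isP_def
proof (intro conjI ballI)
  note [simp] = nt_arr[OF nt]
  show "is_nat_trans C C (functor_comp G F) id_functor (\<lambda>c. cmp C (mu c) (alpha (omap F c)))"
  proof (rule nt_intro[OF fGF fid])
    fix f assume f: "f \<in> Arr C"
    have n1: "cmp C (alpha (omap F (tgt C f))) (fmap G (fmap F f)) = cmp C (fmap G (fmap F f)) (alpha (omap F (src C f)))"
      using nt_nat[OF nt, of "fmap F f"] f by simp
    have n2: "cmp C (mu (tgt C f)) (fmap G (fmap F f)) = cmp C f (mu (src C f))" using muN[OF f] .
    show "cmp C (cmp C (mu (tgt C f)) (alpha (omap F (tgt C f)))) (fmap (functor_comp G F) f) =
         cmp C (fmap id_functor f) (cmp C (mu (src C f)) (alpha (omap F (src C f))))"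
      using f by (simp add: aC n1 xC[OF n2])
  qed (simp)
next
  fix c assume c: "c \<in> Obj C"
  show "cmp C (eta c) (cmp C (mu c) (alpha (omap F c))) = ident C (omap G (omap F c))"
    using bspec[OF s c] c nt_arr[OF nt] by (simp add: aC)
qed

lemma B2b:
  assumes p: "isP p"
  shows "is_nat_trans D C G G (\<lambda>d. cmp C (p (omap G d)) (fmap G (nu d))) \<and>
    (\<forall>c \<in> Obj C. cmp C (cmp C (eta c) (mu c)) ((\<lambda>d. cmp C (p (omap G d)) (fmap G (nu d))) (omap F c))
        = ident C (omap G (omap F c)))"
proof (intro conjI ballI)
  have nt: "is_nat_trans C C (functor_comp G F) id_functor p"
    and s: "\<And>c. c \<in> Obj C \<Longrightarrow> cmp C (eta c) (p c) = ident C (omap G (omap F c))" using p unfolding isP_def by auto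
  note [simp] = nt_arr[OF nt, simplified]
  show "is_nat_trans D C G G (\<lambda>d. cmp C (p (omap G d)) (fmap G (nu d)))"
  proof (rule nt_intro[OF fG fG])
    fix h assume h: "h \<in> Arr D"
    have n1: "cmp C (fmap G (nu (tgt D h))) (fmap G h) = cmp C (fmap G (fmap F (fmap G h))) (fmap G (nu (src D h)))"
      using arg_cong[OF nuN[OF h], of "fmap G"] h by simp
    have n2: "cmp C (p (omap G (tgt D h))) (fmap G (fmap F (fmap G h))) = cmp C (fmap G h) (p (omap G (src D h)))"
      using nt_nat[OF nt, of "fmap G h"] h by simp
    show "cmp C (cmp C (p (omap G (tgt D h))) (fmap G (nu (tgt D h)))) (fmap G h) =
         cmp C (fmap G h) (cmp C (p (omap G (src D h))) (fmap G (nu (src D h))))"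
      using h by (simp add: aC n1 xC[OF n2])
  qed (simp)
next
  have nt: "is_nat_trans C C (functor_comp G F) id_functor p"
    and s: "\<And>c. c \<in> Obj C \<Longrightarrow> cmp C (eta c) (p c) = ident C (omap G (omap F c))" using p unfolding isP_def by auto
  note [simp] = nt_arr[OF nt, simplified]
  fix c assume c: "c \<in> Obj C"
  have n: "cmp C (p c) (fmap G (fmap F (mu c))) = cmp C (mu c) (p (omap G (omap F c)))"
    using nt_nat[OF nt, of "mu c"] c by simp
  have t: "cmp C (fmap G (fmap F (mu c))) (fmap G (nu (omap F c))) = ident C (omap G (omap F c))"
    using arg_cong[OF tri4[OF c], of "fmap G"] c by simp
  show "cmp C (cmp C (eta c) (mu c)) ((\<lambda>d. cmp C (p (omap G d)) (fmap G (nu d))) (omap F c))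
        = ident C (omap G (omap F c))"
    using c s[OF c] by (simp add: aC xC[OF n[symmetric]] t)
qed


lemma B3a:
  assumes nt: "is_nat_trans C D F F beta"
    and s: "\<forall>c \<in> Obj C. cmp C (cmp C (eta c) (mu c)) (fmap G (beta c)) = ident C (omap G (omap F c))"
  shows "isP (\<lambda>c. cmp C (mu c) (fmap G (beta c)))"
  unfolding isP_def
proof (intro conjI ballI)
  note [simp] = nt_arr[OF nt]
  show "is_nat_trans C C (functor_comp G F) id_functor (\<lambda>c. cmp C (mu c) (fmap G (beta c)))"
  proof (rule nt_intro[OF fGF fid])
    fix f assume f: "f \<in> Arr C"
    have n1: "cmp C (fmap G (beta (tgt C f))) (fmap G (fmap F f)) = cmp C (fmap G (fmap F f)) (fmap G (beta (src C f)))"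
      using arg_cong[OF nt_nat[OF nt f], of "fmap G"] f by simp
    have n2: "cmp C (mu (tgt C f)) (fmap G (fmap F f)) = cmp C f (mu (src C f))" using muN[OF f] .
    show "cmp C (cmp C (mu (tgt C f)) (fmap G (beta (tgt C f)))) (fmap (functor_comp G F) f) =
         cmp C (fmap id_functor f) (cmp C (mu (src C f)) (fmap G (beta (src C f))))"
      using f by (simp add: aC n1 xC[OF n2])
  qed (simp)
next
  fix c assume c: "c \<in> Obj C"
  show "cmp C (eta c) (cmp C (mu c) (fmap G (beta c))) = ident C (omap G (omap F c))"
    using bspec[OF s c] c nt_arr[OF nt] by (simp add: aC)
qed

lemma B3b:
  assumes p: "isP p"
  shows "is_nat_trans C D F F (\<lambda>c. cmp D (fmap F (p c)) (nu (omap F c))) \<and>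
    (\<forall>c \<in> Obj C. cmp C (cmp C (eta c) (mu c)) (fmap G ((\<lambda>c. cmp D (fmap F (p c)) (nu (omap F c))) c))
        = ident C (omap G (omap F c)))"
proof (intro conjI ballI)
  have nt: "is_nat_trans C C (functor_comp G F) id_functor p"
    and s: "\<And>c. c \<in> Obj C \<Longrightarrow> cmp C (eta c) (p c) = ident C (omap G (omap F c))" using p unfolding isP_def by auto
  note [simp] = nt_arr[OF nt, simplified]
  show "is_nat_trans C D F F (\<lambda>c. cmp D (fmap F (p c)) (nu (omap F c)))"
  proof (rule nt_intro[OF fF fF])
    fix f assume f: "f \<in> Arr C"
    have n1: "cmp D (nu (omap F (tgt C f))) (fmap F f) = cmp D (fmap F (fmap G (fmap F f))) (nu (omap F (src C f)))"
      using nuN[of "fmap F f"] f by simp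
    have n2: "cmp D (fmap F (p (tgt C f))) (fmap F (fmap G (fmap F f))) = cmp D (fmap F f) (fmap F (p (src C f)))"
      using arg_cong[OF nt_nat[OF nt f], of "fmap F"] f by simp
    show "cmp D (cmp D (fmap F (p (tgt C f))) (nu (omap F (tgt C f)))) (fmap F f) =
         cmp D (fmap F f) (cmp D (fmap F (p (src C f))) (nu (omap F (src C f))))"
      using f by (simp add: aD n1 xD[OF n2])
  qed (simp)
next
  have nt: "is_nat_trans C C (functor_comp G F) id_functor p"
    and s: "\<And>c. c \<in> Obj C \<Longrightarrow> cmp C (eta c) (p c) = ident C (omap G (omap F c))" using p unfolding isP_def by auto
  note [simp] = nt_arr[OF nt, simplified]
  fix c assume c: "c \<in> Obj C"
  have n: "cmp C (mu c) (fmap G (fmap F (p c))) = cmp C (p c) (mu (omap G (omap F c)))"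
    using muN[of "p c"] c by simp
  have t: "cmp C (mu (omap G (omap F c))) (fmap G (nu (omap F c))) = ident C (omap G (omap F c))"
    using tri3[of "omap F c"] c by simp
  show "cmp C (cmp C (eta c) (mu c)) (fmap G ((\<lambda>c. cmp D (fmap F (p c)) (nu (omap F c))) c))
        = ident C (omap G (omap F c))"
    using c s[OF c] by (simp add: aC xC[OF n] t)
qed

lemma B4a:
  assumes nt: "is_nat_trans D C G G alpha"
    and s: "\<forall>c \<in> Obj C. cmp C (alpha (omap F c)) (cmp C (eta c) (mu c)) = ident C (omap G (omap F c))"
  shows "isQ (\<lambda>c. cmp C (alpha (omap F c)) (eta c))"
  unfolding isQ_def
proof (intro conjI ballI)
  note [simp] = nt_arr[OF nt]
  show "is_nat_trans C C id_functor (functor_comp G F) (\<lambda>c. cmp C (alpha (omap F c)) (eta c))"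
  proof (rule nt_intro[OF fid fGF])
    fix f assume f: "f \<in> Arr C"
    have n1: "cmp C (alpha (omap F (tgt C f))) (fmap G (fmap F f)) = cmp C (fmap G (fmap F f)) (alpha (omap F (src C f)))"
      using nt_nat[OF nt, of "fmap F f"] f by simp
    have n2: "cmp C (eta (tgt C f)) f = cmp C (fmap G (fmap F f)) (eta (src C f))" using etaN[OF f] .
    show "cmp C (cmp C (alpha (omap F (tgt C f))) (eta (tgt C f))) (fmap id_functor f) =
         cmp C (fmap (functor_comp G F) f) (cmp C (alpha (omap F (src C f))) (eta (src C f)))"
      using f by (simp add: aC n2 xC[OF n1])
  qed (simp)
next
  fix c assume c: "c \<in> Obj C"
  show "cmp C (cmp C (alpha (omap F c)) (eta c)) (mu c) = ident C (omap G (omap F c))"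
    using bspec[OF s c] c nt_arr[OF nt] by (simp add: aC)
qed

lemma B4b:
  assumes q: "isQ q"
  shows "is_nat_trans D C G G (\<lambda>d. cmp C (fmap G (eps d)) (q (omap G d))) \<and>
    (\<forall>c \<in> Obj C. cmp C ((\<lambda>d. cmp C (fmap G (eps d)) (q (omap G d))) (omap F c)) (cmp C (eta c) (mu c))
        = ident C (omap G (omap F c)))"
proof (intro conjI ballI)
  have nt: "is_nat_trans C C id_functor (functor_comp G F) q"
    and s: "\<And>c. c \<in> Obj C \<Longrightarrow> cmp C (q c) (mu c) = ident C (omap G (omap F c))" using q unfolding isQ_def by auto
  note [simp] = nt_arr[OF nt, simplified]
  show "is_nat_trans D C G G (\<lambda>d. cmp C (fmap G (eps d)) (q (omap G d)))"
  proof (rule nt_intro[OF fG fG])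
    fix h assume h: "h \<in> Arr D"
    have n1: "cmp C (q (omap G (tgt D h))) (fmap G h) = cmp C (fmap G (fmap F (fmap G h))) (q (omap G (src D h)))"
      using nt_nat[OF nt, of "fmap G h"] h by simp
    have n2: "cmp C (fmap G (eps (tgt D h))) (fmap G (fmap F (fmap G h))) = cmp C (fmap G h) (fmap G (eps (src D h)))"
      using arg_cong[OF epsN[OF h], of "fmap G"] h by simp
    show "cmp C (cmp C (fmap G (eps (tgt D h))) (q (omap G (tgt D h)))) (fmap G h) =
         cmp C (fmap G h) (cmp C (fmap G (eps (src D h))) (q (omap G (src D h))))"
      using h by (simp add: aC n1 xC[OF n2])
  qed (simp)
next
  have nt: "is_nat_trans C C id_functor (functor_comp G F) q"
    and s: "\<And>c. c \<in> Obj C \<Longrightarrow> cmp C (q c) (mu c) = ident C (omap G (omap F c))" using q unfolding isQ_def by auto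
  note [simp] = nt_arr[OF nt, simplified]
  fix c assume c: "c \<in> Obj C"
  have n: "cmp C (q (omap G (omap F c))) (eta c) = cmp C (fmap G (fmap F (eta c))) (q c)"
    using nt_nat[OF nt, of "eta c"] c by simp
  have t: "cmp C (fmap G (eps (omap F c))) (fmap G (fmap F (eta c))) = ident C (omap G (omap F c))"
    using arg_cong[OF tri1[OF c], of "fmap G"] c by simp
  show "cmp C ((\<lambda>d. cmp C (fmap G (eps d)) (q (omap G d))) (omap F c)) (cmp C (eta c) (mu c))
        = ident C (omap G (omap F c))"
    using c s[OF c] by (simp add: aC xC[OF n] xCi[OF t] t)
qed

lemma B5a:
  assumes nt: "is_nat_trans C D F F beta"
    and s: "\<forall>c \<in> Obj C. cmp C (fmap G (beta c)) (cmp C (eta c) (mu c)) = ident C (omap G (omap F c))"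
  shows "isQ (\<lambda>c. cmp C (fmap G (beta c)) (eta c))"
  unfolding isQ_def
proof (intro conjI ballI)
  note [simp] = nt_arr[OF nt]
  show "is_nat_trans C C id_functor (functor_comp G F) (\<lambda>c. cmp C (fmap G (beta c)) (eta c))"
  proof (rule nt_intro[OF fid fGF])
    fix f assume f: "f \<in> Arr C"
    have n1: "cmp C (fmap G (beta (tgt C f))) (fmap G (fmap F f)) = cmp C (fmap G (fmap F f)) (fmap G (beta (src C f)))"
      using arg_cong[OF nt_nat[OF nt f], of "fmap G"] f by simp
    have n2: "cmp C (eta (tgt C f)) f = cmp C (fmap G (fmap F f)) (eta (src C f))" using etaN[OF f] .
    show "cmp C (cmp C (fmap G (beta (tgt C f))) (eta (tgt C f))) (fmap id_functor f) =
         cmp C (fmap (functor_comp G F) f) (cmp C (fmap G (beta (src C f))) (eta (src C f)))"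
      using f by (simp add: aC n2 xC[OF n1])
  qed (simp)
next
  fix c assume c: "c \<in> Obj C"
  show "cmp C (cmp C (fmap G (beta c)) (eta c)) (mu c) = ident C (omap G (omap F c))"
    using bspec[OF s c] c nt_arr[OF nt] by (simp add: aC)
qed

lemma B5b:
  assumes q: "isQ q"
  shows "is_nat_trans C D F F (\<lambda>c. cmp D (eps (omap F c)) (fmap F (q c))) \<and>
    (\<forall>c \<in> Obj C. cmp C (fmap G ((\<lambda>c. cmp D (eps (omap F c)) (fmap F (q c))) c)) (cmp C (eta c) (mu c))
        = ident C (omap G (omap F c)))"
proof (intro conjI ballI)
  have nt: "is_nat_trans C C id_functor (functor_comp G F) q"
    and s: "\<And>c. c \<in> Obj C \<Longrightarrow> cmp C (q c) (mu c) = ident C (omap G (omap F c))" using q unfolding isQ_def by auto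
  note [simp] = nt_arr[OF nt, simplified]
  show "is_nat_trans C D F F (\<lambda>c. cmp D (eps (omap F c)) (fmap F (q c)))"
  proof (rule nt_intro[OF fF fF])
    fix f assume f: "f \<in> Arr C"
    have n1: "cmp D (fmap F (q (tgt C f))) (fmap F f) = cmp D (fmap F (fmap G (fmap F f))) (fmap F (q (src C f)))"
      using arg_cong[OF nt_nat[OF nt f], of "fmap F"] f by simp
    have n2: "cmp D (eps (omap F (tgt C f))) (fmap F (fmap G (fmap F f))) = cmp D (fmap F f) (eps (omap F (src C f)))"
      using epsN[of "fmap F f"] f by simp
    show "cmp D (cmp D (eps (omap F (tgt C f))) (fmap F (q (tgt C f)))) (fmap F f) =
         cmp D (fmap F f) (cmp D (eps (omap F (src C f))) (fmap F (q (src C f))))"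
      using f by (simp add: aD n1 xD[OF n2])
  qed (simp)
next
  have nt: "is_nat_trans C C id_functor (functor_comp G F) q"
    and s: "\<And>c. c \<in> Obj C \<Longrightarrow> cmp C (q c) (mu c) = ident C (omap G (omap F c))" using q unfolding isQ_def by auto
  note [simp] = nt_arr[OF nt, simplified]
  fix c assume c: "c \<in> Obj C"
  have n: "cmp C (fmap G (fmap F (q c))) (eta c) = cmp C (eta (omap G (omap F c))) (q c)"
    using etaN[of "q c"] c by simp
  have t: "cmp C (fmap G (eps (omap F c))) (eta (omap G (omap F c))) = ident C (omap G (omap F c))"
    using tri2[of "omap F c"] c by simp
  show "cmp C (fmap G ((\<lambda>c. cmp D (eps (omap F c)) (fmap F (q c))) c)) (cmp C (eta c) (mu c))
        = ident C (omap G (omap F c))"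
    using c s[OF c] by (simp add: aC xC[OF n] xCi[OF t] t)
qed


lemma uniq:
  assumes c: "c \<in> Obj C" and l: "l \<in> Arr C" "src C l = omap G (omap F c)" "tgt C l = omap G (omap F c)"
    and r: "r \<in> Arr C" "src C r = omap G (omap F c)" "tgt C r = omap G (omap F c)"
    and er: "cmp C (cmp C (eta c) (mu c)) r = ident C (omap G (omap F c))"
    and le: "cmp C l (cmp C (eta c) (mu c)) = ident C (omap G (omap F c))"
  shows "l = r"
proof -
  have "l = cmp C l (cmp C (cmp C (eta c) (mu c)) r)" using er l c by simp
  also have "\<dots> = cmp C (cmp C l (cmp C (eta c) (mu c))) r" using l r c by (simp add: aC)
  also have "\<dots> = r" using le r c by simp
  finally show ?thesis .
qed

end
theorem proposition2p7:
  fixes C :: "('a, 'b) category" and D :: "('c, 'd) category"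
    and F :: "('a, 'b, 'c, 'd) functr" and G :: "('c, 'd, 'a, 'b) functr"
    and eta :: "'a \<Rightarrow> 'b" and eps :: "'c \<Rightarrow> 'd"
    and nu :: "'c \<Rightarrow> 'd" and mu :: "'a \<Rightarrow> 'b"
  assumes FG: "is_adjunction C D F G eta eps"
    and GF: "is_adjunction D C G F nu mu"
  defines "cond2 \<equiv> \<lambda>alpha. is_nat_trans D C G G alpha \<and>
             (\<forall>c \<in> Obj C. cmp C (cmp C (eta c) (mu c)) (alpha (omap F c))
                            = ident C (omap G (omap F c)))"
    and "cond3 \<equiv> \<lambda>beta. is_nat_trans C D F F beta \<and>
             (\<forall>c \<in> Obj C. cmp C (cmp C (eta c) (mu c)) (fmap G (beta c))
                            = ident C (omap G (omap F c)))"
    and "cond4 \<equiv> \<lambda>alpha'. is_nat_trans D C G G alpha' \<and>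
             (\<forall>c \<in> Obj C. cmp C (alpha' (omap F c)) (cmp C (eta c) (mu c))
                            = ident C (omap G (omap F c)))"
    and "cond5 \<equiv> \<lambda>beta'. is_nat_trans C D F F beta' \<and>
             (\<forall>c \<in> Obj C. cmp C (fmap G (beta' c)) (cmp C (eta c) (mu c))
                            = ident C (omap G (omap F c)))"
  shows "(naturally_full C D F \<longleftrightarrow> (\<exists>alpha. cond2 alpha)) \<and>
         (naturally_full C D F \<longleftrightarrow> (\<exists>beta. cond3 beta)) \<and>
         (naturally_full C D F \<longleftrightarrow> (\<exists>alpha'. cond4 alpha')) \<and>
         (naturally_full C D F \<longleftrightarrow> (\<exists>beta'. cond5 beta')) \<and>
         (naturally_full C D F \<longrightarrow>
            (\<forall>c \<in> Obj C. is_iso C (cmp C (eta c) (mu c))) \<and>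
            (\<forall>alpha beta alpha' beta'.
               cond2 alpha \<and> cond3 beta \<and> cond4 alpha' \<and> cond5 beta' \<longrightarrow>
               (\<forall>c \<in> Obj C. alpha (omap F c) = alpha' (omap F c) \<and>
                             alpha' (omap F c) = fmap G (beta c) \<and>
                             fmap G (beta c) = fmap G (beta' c))))"
proof -
  interpret frob C D F G eta eps nu mu using FG GF by unfold_locales
  have e2: "naturally_full C D F \<longleftrightarrow> (\<exists>alpha. cond2 alpha)"
  proof
    assume "naturally_full C D F"
    then obtain p where p: "isP p" using nf_P by blast
    show "\<exists>alpha. cond2 alpha" using B2b[OF p] unfolding cond2_def by blast
  next
    assume "\<exists>alpha. cond2 alpha"
    then obtain alpha where "cond2 alpha" by blast
    then show "naturally_full C D F" using P_nf[OF B2a] unfolding cond2_def by blast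
  qed
  have e3: "naturally_full C D F \<longleftrightarrow> (\<exists>beta. cond3 beta)"
  proof
    assume "naturally_full C D F"
    then obtain p where p: "isP p" using nf_P by blast
    show "\<exists>beta. cond3 beta" using B3b[OF p] unfolding cond3_def by blast
  next
    assume "\<exists>beta. cond3 beta"
    then obtain beta where "cond3 beta" by blast
    then show "naturally_full C D F" using P_nf[OF B3a] unfolding cond3_def by blast
  qed
  have e4: "naturally_full C D F \<longleftrightarrow> (\<exists>alpha. cond4 alpha)"
  proof
    assume "naturally_full C D F"
    then obtain q where q: "isQ q" using nf_Q by blast
    show "\<exists>alpha. cond4 alpha" using B4b[OF q] unfolding cond4_def by blast
  next
    assume "\<exists>alpha. cond4 alpha"
    then obtain alpha where "cond4 alpha" by blast
    then show "naturally_full C D F" using Q_nf[OF B4a] unfolding cond4_def by blast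
  qed
  have e5: "naturally_full C D F \<longleftrightarrow> (\<exists>beta. cond5 beta)"
  proof
    assume "naturally_full C D F"
    then obtain q where q: "isQ q" using nf_Q by blast
    show "\<exists>beta. cond5 beta" using B5b[OF q] unfolding cond5_def by blast
  next
    assume "\<exists>beta. cond5 beta"
    then obtain beta where "cond5 beta" by blast
    then show "naturally_full C D F" using Q_nf[OF B5a] unfolding cond5_def by blast
  qed
  have iso: "\<forall>c \<in> Obj C. is_iso C (cmp C (eta c) (mu c))" if nf: "naturally_full C D F"
  proof
    fix c assume c: "c \<in> Obj C"
    obtain a where a: "cond2 a" using e2 nf by blast
    obtain a' where a': "cond4 a'" using e4 nf by blast
    have an: "is_nat_trans D C G G a" and as: "cmp C (cmp C (eta c) (mu c)) (a (omap F c)) = ident C (omap G (omap F c))"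
      using a c unfolding cond2_def by auto
    have an': "is_nat_trans D C G G a'" and as': "cmp C (a' (omap F c)) (cmp C (eta c) (mu c)) = ident C (omap G (omap F c))"
      using a' c unfolding cond4_def by auto
    have eq: "a' (omap F c) = a (omap F c)"
      by (rule uniq[OF c _ _ _ _ _ _ as as']) (use c nt_arr[OF an] nt_arr[OF an'] in simp_all)
    show "is_iso C (cmp C (eta c) (mu c))" unfolding is_iso_def
      using c as as' eq nt_arr[OF an] by (auto simp: Hom_iff intro!: bexI[of _ "a (omap F c)"])
  qed
  have un: "\<forall>c \<in> Obj C. alpha (omap F c) = alpha' (omap F c) \<and>
                             alpha' (omap F c) = fmap G (beta c) \<and>
                             fmap G (beta c) = fmap G (beta' c)"
    if h: "cond2 alpha" "cond3 beta" "cond4 alpha'" "cond5 beta'" for alpha beta alpha' beta'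
  proof
    fix c assume c: "c \<in> Obj C"
    have an: "is_nat_trans D C G G alpha" and as: "cmp C (cmp C (eta c) (mu c)) (alpha (omap F c)) = ident C (omap G (omap F c))"
      using h c unfolding cond2_def by auto
    have bn: "is_nat_trans C D F F beta" and bs: "cmp C (cmp C (eta c) (mu c)) (fmap G (beta c)) = ident C (omap G (omap F c))"
      using h c unfolding cond3_def by auto
    have an': "is_nat_trans D C G G alpha'" and as': "cmp C (alpha' (omap F c)) (cmp C (eta c) (mu c)) = ident C (omap G (omap F c))"
      using h c unfolding cond4_def by auto
    have bn': "is_nat_trans C D F F beta'" and bs': "cmp C (fmap G (beta' c)) (cmp C (eta c) (mu c)) = ident C (omap G (omap F c))"
      using h c unfolding cond5_def by auto
    have 1: "alpha' (omap F c) = alpha (omap F c)"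
      by (rule uniq[OF c _ _ _ _ _ _ as as']) (use c nt_arr[OF an] nt_arr[OF an'] in simp_all)
    have 2: "alpha' (omap F c) = fmap G (beta c)"
      by (rule uniq[OF c _ _ _ _ _ _ bs as']) (use c nt_arr[OF bn] nt_arr[OF an'] in simp_all)
    have 3: "fmap G (beta' c) = fmap G (beta c)"
      by (rule uniq[OF c _ _ _ _ _ _ bs bs']) (use c nt_arr[OF bn] nt_arr[OF bn'] in simp_all)
    show "alpha (omap F c) = alpha' (omap F c) \<and> alpha' (omap F c) = fmap G (beta c) \<and>
          fmap G (beta c) = fmap G (beta' c)" using 1 2 3 by simp
  qed
  show ?thesis using e2 e3 e4 e5 iso un by blast
qed
end
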